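(* Let ${\cal X}$ be finite with $|{\cal X}|\ge 2$, $f\sim\mathcal{GP}(0,k)$ with $k$ positive semidefinite, and let $\zeta_t$ be a random variable, independent of $f$ and of ${\cal D}_{t-1}$, following the shifted exponential distribution with shift $s_t=2\log(|{\cal X}|/2)$ and rate $\lambda=1/2$. Let $\mathbf{x}^*=\arg\max_{\mathbf{x}\in{\cal X}}f(\mathbf{x})$. Then for every $t\ge1$ and any given ${\cal D}_{t-1}$, $$\mathbb{E}\bigl[f(\mathbf{x}^* )\mid{\cal D}_{t-1}\bigr]\le \mathbb{E}\Bigl[\max_{\mathbf{x}\in{\cal X}}\ \mu_{t-1}(\mathbf{x})+\zeta_t^{1/2}\sigma_{t-1}(\mathbf{x})\ \Big|\ {\cal D}_{t-1}\Bigr].$$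
   Context: Observation model: $y_i=f(\mathbf{x}_i)+\epsilon_i$ with $\epsilon_i\sim\mathcal N(0,\sigma^2)$ i.i.d., $\sigma^2>0$, independent of $f$; ${\cal D}_{t-1}=\{(\mathbf{x}_i,y_i)\}_{i=1}^{t-1}$; $\mu_{t-1},\sigma^2_{t-1}$ denote the GP posterior mean and variance of $f$ given ${\cal D}_{t-1}$ (standard GP regression formulas with noise variance $\sigma^2$). The shifted exponential distribution with shift $s$ and rate $\lambda$ is the law of $s+Z$ with $Z\sim\mathrm{Exp}(\lambda)$, i.e. density $\lambda e^{-\lambda(\zeta-s)}$ for $\zeta\ge s$ and $0$ otherwise. *)

theory Defs
  imports "HOL-Probability.Probability"
begin

definition real_gaussian_rv :: "'w measure \<Rightarrow> ('w \<Rightarrow> real) \<Rightarrow> real \<Rightarrow> real \<Rightarrow> bool" where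
  "real_gaussian_rv M X a v \<longleftrightarrow>
     X \<in> borel_measurable M \<and>
     (if v = 0 then (AE \<omega> in M. X \<omega> = a)
      else v > 0 \<and> distributed M lborel X (normal_density a (sqrt v)))"

definition gaussian_vec ::
  "'w measure \<Rightarrow> ('w \<Rightarrow> 'x::finite \<Rightarrow> real) \<Rightarrow> ('x \<Rightarrow> real) \<Rightarrow> ('x \<Rightarrow> 'x \<Rightarrow> real) \<Rightarrow> bool" where
  "gaussian_vec M F m C \<longleftrightarrow>
     prob_space M \<and>
     (\<forall>c :: 'x \<Rightarrow> real. real_gaussian_rv M (\<lambda>\<omega>. \<Sum>x\<in>UNIV. c x * F \<omega> x)
        (\<Sum>x\<in>UNIV. c x * m x) (\<Sum>x\<in>UNIV. \<Sum>y\<in>UNIV. c x * c y * C x y))"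

definition psd_kernel :: "('x::finite \<Rightarrow> 'x \<Rightarrow> real) \<Rightarrow> bool" where
  "psd_kernel k \<longleftrightarrow> (\<forall>x y. k x y = k y x) \<and>
     (\<forall>c :: 'x \<Rightarrow> real. (\<Sum>x\<in>UNIV. \<Sum>y\<in>UNIV. c x * c y * k x y) \<ge> 0)"

definition gram_reg :: "('x \<Rightarrow> 'x \<Rightarrow> real) \<Rightarrow> real \<Rightarrow> 'x list \<Rightarrow> nat \<Rightarrow> nat \<Rightarrow> real" where
  "gram_reg k s2 xs i j = k (xs ! i) (xs ! j) + (if i = j then s2 else 0)"

definition gram_reg_inv :: "('x \<Rightarrow> 'x \<Rightarrow> real) \<Rightarrow> real \<Rightarrow> 'x list \<Rightarrow> nat \<Rightarrow> nat \<Rightarrow> real" where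
  "gram_reg_inv k s2 xs = (THE B.
     (\<forall>i<length xs. \<forall>l<length xs.
        (\<Sum>j<length xs. gram_reg k s2 xs i j * B j l) = (if i = l then 1 else 0)) \<and>
     (\<forall>i j. length xs \<le> i \<or> length xs \<le> j \<longrightarrow> B i j = 0))"

definition post_mean :: "('x \<Rightarrow> 'x \<Rightarrow> real) \<Rightarrow> real \<Rightarrow> 'x list \<Rightarrow> real list \<Rightarrow> 'x \<Rightarrow> real" where
  "post_mean k s2 xs ys x =
     (\<Sum>i<length xs. \<Sum>j<length xs. k x (xs ! i) * gram_reg_inv k s2 xs i j * ys ! j)"

definition post_cov :: "('x \<Rightarrow> 'x \<Rightarrow> real) \<Rightarrow> real \<Rightarrow> 'x list \<Rightarrow> 'x \<Rightarrow> 'x \<Rightarrow> real" where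
  "post_cov k s2 xs x x' = k x x' -
     (\<Sum>i<length xs. \<Sum>j<length xs. k x (xs ! i) * gram_reg_inv k s2 xs i j * k (xs ! j) x')"

definition post_sd :: "('x \<Rightarrow> 'x \<Rightarrow> real) \<Rightarrow> real \<Rightarrow> 'x list \<Rightarrow> 'x \<Rightarrow> real" where
  "post_sd k s2 xs x = sqrt (post_cov k s2 xs x x)"

definition shifted_exp_density :: "real \<Rightarrow> real \<Rightarrow> real \<Rightarrow> real" where
  "shifted_exp_density s l z = exponential_density l (z - s)"

end

theory Submission
  imports Defs
begin


lemma layer_cake:
  assumes M: "prob_space M" and f[measurable]: "f \<in> borel_measurable M"
  shows "(\<integral>\<^sup>+x. ennreal (f x) \<partial>M) =
    (\<integral>\<^sup>+t. emeasure M {x\<in>space M. t < f x} * indicator {0..} t \<partial>lborel)"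
proof -
  interpret prob_space M by fact
  interpret P: pair_sigma_finite M lborel
    by (simp add: pair_sigma_finite_def lborel.sigma_finite_measure_axioms sigma_finite_measure_axioms)
  have e: "ennreal (f x) = (\<integral>\<^sup>+t. indicator {0..<f x} t \<partial>lborel)" for x
    by (cases "0 \<le> f x") (auto simp: ennreal_neg)
  have "(\<integral>\<^sup>+x. ennreal (f x) \<partial>M) = (\<integral>\<^sup>+x. (\<integral>\<^sup>+t. indicator {0..<f x} t \<partial>lborel) \<partial>M)"
    by (simp add: e)
  also have "\<dots> = (\<integral>\<^sup>+t. (\<integral>\<^sup>+x. indicator {0..<f x} t \<partial>M) \<partial>lborel)"
  proof (rule P.Fubini'[symmetric])
    have "(\<lambda>(x, t). indicator {0..<f x} t :: ennreal) = (\<lambda>p. if 0 \<le> snd p \<and> snd p < f (fst p) then 1 else 0)"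
      by (auto simp: fun_eq_iff split: split_indicator)
    then show "(\<lambda>(x, t). indicator {0..<f x} t :: ennreal) \<in> borel_measurable (M \<Otimes>\<^sub>M lborel)"
      by simp
  qed
  also have "\<dots> = (\<integral>\<^sup>+t. emeasure M {x\<in>space M. t < f x} * indicator {0..} t \<partial>lborel)"
  proof (rule nn_integral_cong)
    fix t :: real
    have "(\<integral>\<^sup>+x. indicator {0..<f x} t \<partial>M) = (\<integral>\<^sup>+x. indicator {x\<in>space M. t < f x} x * indicator {0..} t \<partial>M)"
      by (rule nn_integral_cong) (auto split: split_indicator)
    also have "\<dots> = emeasure M {x\<in>space M. t < f x} * indicator {0..} t"
      by (subst nn_integral_multc) auto
    finally show "(\<integral>\<^sup>+x. indicator {0..<f x} t \<partial>M) = emeasure M {x\<in>space M. t < f x} * indicator {0..} t" .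
  qed
  finally show ?thesis .
qed

lemma dominance:
  fixes W :: "'a \<Rightarrow> real" and phi :: "real \<Rightarrow> real"
  assumes M: "prob_space M" and N: "prob_space N" and sN: "sets N = sets borel"
    and W[measurable]: "W \<in> borel_measurable M" and phi[measurable]: "phi \<in> borel_measurable borel"
    and mono: "mono phi"
    and dom: "\<And>a. emeasure M {x\<in>space M. a \<le> W x} \<le> emeasure N {z. a < z}"
  shows "(\<integral>\<^sup>+x. ennreal (phi (W x)) \<partial>M) \<le> (\<integral>\<^sup>+z. ennreal (phi z) \<partial>N)"
proof -
  interpret M: prob_space M by fact
  interpret N: prob_space N by fact
  have spN: "space N = UNIV" using sets_eq_imp_space_eq[OF sN] by simp
  have phiN: "phi \<in> borel_measurable N" using measurable_cong_sets[OF sN refl, of borel] phi by blast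
  have "(\<integral>\<^sup>+x. ennreal (phi (W x)) \<partial>M) =
    (\<integral>\<^sup>+t. emeasure M {x\<in>space M. t < phi (W x)} * indicator {0..} t \<partial>lborel)"
    by (rule layer_cake[OF M]) simp
  also have "\<dots> \<le> (\<integral>\<^sup>+t. emeasure N {x\<in>space N. t < phi x} * indicator {0..} t \<partial>lborel)"
  proof (rule nn_integral_mono)
    fix t :: real
    define U where "U = {u. t < phi u}"
    have "emeasure M {x\<in>space M. t < phi (W x)} \<le> emeasure N {x\<in>space N. t < phi x}"
    proof (cases "U = {}")
      case True
      then have "{x\<in>space M. t < phi (W x)} = {}" by (auto simp: U_def)
      then show ?thesis by (metis emeasure_empty zero_le)
    next
      case ne: False
      show ?thesis
      proof (cases "bdd_below U")
        case False
        have "U = UNIV"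
        proof safe
          fix z :: real
          from False have "\<not> (\<forall>u\<in>U. z \<le> u)" unfolding bdd_below_def by blast
          then obtain u where "u \<in> U" "u < z" by (meson not_le_imp_less)
          then show "z \<in> U" using mono unfolding U_def mono_def by (auto intro: less_le_trans)
        qed simp
        then have "{x\<in>space N. t < phi x} = space N" by (auto simp: U_def)
        then show ?thesis using M.emeasure_space_1 N.emeasure_space_1
          by (metis M.emeasure_space_le_1 dual_order.trans emeasure_space order_refl)
      next
        case True
        define a where "a = Inf U"
        have "emeasure M {x\<in>space M. t < phi (W x)} \<le> emeasure M {x\<in>space M. a \<le> W x}"
          using True by (intro emeasure_mono) (auto simp: a_def U_def intro!: cInf_lower)
        also have "\<dots> \<le> emeasure N {z. a < z}" by (rule dom)
        also have "\<dots> \<le> emeasure N {x\<in>space N. t < phi x}"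
        proof (rule emeasure_mono)
          show "{z. a < z} \<subseteq> {x\<in>space N. t < phi x}"
          proof safe
            fix z assume "a < z"
            then obtain u where "u \<in> U" "u < z" using cInf_less_iff[OF ne True] a_def by auto
            then show "t < phi z" using mono unfolding U_def mono_def by (auto intro: less_le_trans)
          qed (simp add: spN)
          show "{x\<in>space N. t < phi x} \<in> sets N" using phiN by measurable
        qed
        finally show ?thesis .
      qed
    qed
    then show "emeasure M {x\<in>space M. t < phi (W x)} * indicator {0..} t
      \<le> emeasure N {x\<in>space N. t < phi x} * indicator {0..} t"
      by (intro mult_right_mono) auto
  qed
  also have "\<dots> = (\<integral>\<^sup>+z. ennreal (phi z) \<partial>N)"
    by (rule layer_cake[OF N phiN, symmetric])
  finally show ?thesis .
qed



lemma half_std: "(\<integral>\<^sup>+y. ennreal (std_normal_density y) * indicator {0..} y \<partial>lborel) = ennreal (1/2)"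
proof -
  have g: "(\<integral>\<^sup>+x. ennreal (indicator {0..} x * exp (-x\<^sup>2)) \<partial>lborel) = ennreal (sqrt pi / 2)"
    using gaussian_moment_0 by (subst nn_integral_eq_integral) (auto simp: has_bochner_integral_iff)
  have "(\<integral>\<^sup>+y. ennreal (std_normal_density y) * indicator {0..} y \<partial>lborel)
     = \<bar>sqrt 2\<bar> * (\<integral>\<^sup>+u. ennreal (std_normal_density (0 + sqrt 2 * u)) * indicator {0..} (0 + sqrt 2 * u) \<partial>lborel)"
    by (rule nn_integral_real_affine) auto
  also have "\<dots> = sqrt 2 * (\<integral>\<^sup>+u. ennreal (1 / sqrt (2 * pi)) * ennreal (indicator {0..} u * exp (-u\<^sup>2)) \<partial>lborel)"
  proof -
    have "\<And>u. ennreal (std_normal_density (0 + sqrt 2 * u)) * indicator {0..} (0 + sqrt 2 * u)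
        = ennreal (1 / sqrt (2 * pi)) * ennreal (indicator {0..} u * exp (-u\<^sup>2))"
      by (auto simp: std_normal_density_def power_mult_distrib zero_le_mult_iff ennreal_mult[symmetric] split: split_indicator)
    then show ?thesis by simp
  qed
  also have "\<dots> = sqrt 2 * (ennreal (1 / sqrt (2 * pi)) * ennreal (sqrt pi / 2))"
    by (subst nn_integral_cmult) (auto simp: g)
  also have "\<dots> = ennreal (sqrt 2 * (1 / sqrt (2 * pi)) * (sqrt pi / 2))"
    by (simp add: ennreal_mult[symmetric] mult.assoc)
  also have "sqrt 2 * (1 / sqrt (2 * pi)) * (sqrt pi / 2) = 1/2"
    by (simp add: real_sqrt_mult field_simps)
  finally show ?thesis .
qed

lemma gauss_tail:
  fixes b s m :: real assumes b: "0 \<le> b" and s: "0 < s"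
  shows "(\<integral>\<^sup>+x. ennreal (normal_density m s x) * indicator {m + s*b..} x \<partial>lborel) \<le> ennreal (exp (-b\<^sup>2/2) / 2)"
proof -
  have "(\<integral>\<^sup>+x. ennreal (normal_density m s x) * indicator {m + s*b..} x \<partial>lborel)
     = \<bar>s\<bar> * (\<integral>\<^sup>+y. ennreal (normal_density m s ((m + s*b) + s * y)) * indicator {m + s*b..} ((m + s*b) + s * y) \<partial>lborel)"
    by (rule nn_integral_real_affine) (use s in auto)
  also have "\<dots> = (\<integral>\<^sup>+y. ennreal (std_normal_density (b + y)) * indicator {0..} y \<partial>lborel)"
  proof -
    have "\<And>y. ennreal s * (ennreal (normal_density m s ((m + s*b) + s * y)) * indicator {m + s*b..} ((m + s*b) + s * y))
       = ennreal (std_normal_density (b + y)) * indicator {0..} y"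
    proof -
      fix y
      have i: "indicator {m + s*b..} ((m + s*b) + s * y) = (indicator {0..} y :: ennreal)"
        using s by (auto split: split_indicator simp: zero_le_mult_iff)
      have sq: "((m + s*b) + s * y - m)\<^sup>2 = s\<^sup>2 * (b + y)\<^sup>2"
        by (simp add: power2_eq_square algebra_simps)
      have "s * normal_density m s ((m + s*b) + s * y) = std_normal_density (b + y)"
        unfolding normal_density_def sq using s by (simp add: normal_density_def std_normal_density_def real_sqrt_mult field_simps)
      then show "ennreal s * (ennreal (normal_density m s ((m + s*b) + s * y)) * indicator {m + s*b..} ((m + s*b) + s * y))
       = ennreal (std_normal_density (b + y)) * indicator {0..} y"
        using s by (simp add: i ennreal_mult[symmetric] mult.assoc[symmetric])
    qed
    then show ?thesis using s by (simp add: nn_integral_cmult[symmetric])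
  qed
  also have "\<dots> \<le> (\<integral>\<^sup>+y. ennreal (exp (-b\<^sup>2/2)) * (ennreal (std_normal_density y) * indicator {0..} y) \<partial>lborel)"
  proof (rule nn_integral_mono)
    fix y :: real
    show "ennreal (std_normal_density (b + y)) * indicator {0..} y \<le> ennreal (exp (-b\<^sup>2/2)) * (ennreal (std_normal_density y) * indicator {0..} y)"
    proof (cases "0 \<le> y")
      case True
      have "exp (-(b+y)\<^sup>2/2) \<le> exp (-b\<^sup>2/2) * exp (-y\<^sup>2/2)"
        using True b by (simp add: exp_add[symmetric] power2_eq_square field_simps)
      then have "std_normal_density (b + y) \<le> exp (-b\<^sup>2/2) * std_normal_density y"
        by (simp add: std_normal_density_def field_simps)
      then show ?thesis using True by (simp add: ennreal_mult[symmetric] ennreal_leI)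
    qed simp
  qed
  also have "\<dots> = ennreal (exp (-b\<^sup>2/2)) * ennreal (1/2)"
    by (simp add: nn_integral_cmult half_std)
  also have "\<dots> = ennreal (exp (-b\<^sup>2/2) / 2)"
    by (subst ennreal_mult[symmetric]) auto
  finally show ?thesis .
qed



lemma N_distr:
  "density lborel (shifted_exp_density s0 l) = distr (density lborel (exponential_density l)) borel ((+) s0)"
proof -
  have "density lborel (shifted_exp_density s0 l) = density (distr lborel borel ((+) s0)) (shifted_exp_density s0 l)"
    by (simp add: lborel_distr_plus)
  also have "\<dots> = distr (density lborel (\<lambda>x. shifted_exp_density s0 l (s0 + x))) borel ((+) s0)"
    by (rule density_distr) (auto simp: shifted_exp_density_def)
  also have "(\<lambda>x. shifted_exp_density s0 l (s0 + x)) = exponential_density l"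
    by (simp add: shifted_exp_density_def fun_eq_iff)
  finally show ?thesis .
qed

lemma N_prob: "0 < l \<Longrightarrow> prob_space (density lborel (shifted_exp_density s0 l))"
  unfolding N_distr
  by (rule prob_space.prob_space_distr[OF prob_space_exponential_density]) auto

lemma N_sets: "sets (density lborel (shifted_exp_density s0 l)) = sets borel"
  by simp

lemma E_gt: assumes l: "0 < l" and c: "0 \<le> c"
  shows "emeasure (density lborel (exponential_density l)) {y. c < y} = ennreal (exp (- c * l))"
proof -
  interpret E: prob_space "density lborel (exponential_density l)"
    by (rule prob_space_exponential_density[OF l])
  have "emeasure (density lborel (exponential_density l)) {..c} = ennreal (1 - exp (- c * l))"
    using emeasure_erlang_density[OF l, of 0 c] c by (simp add: erlang_CDF_def mult.commute)
  moreover have "0 \<le> 1 - exp (- c * l)" using c l by simp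
  ultimately have m: "E.prob {..c} = 1 - exp (- c * l)"
    by (simp add: E.emeasure_eq_measure)
  have "{y. c < y} = space (density lborel (exponential_density l)) - {..c}" by auto
  then have "E.prob {y. c < y} = 1 - E.prob {..c}"
    by (metis E.prob_compl atMost_borel sets_density sets_lborel)
  with m show ?thesis by (simp add: E.emeasure_eq_measure)
qed

lemma N_gt: assumes l: "0 < l" and c: "0 \<le> c"
  shows "emeasure (density lborel (shifted_exp_density s0 l)) {z. s0 + c < z} = ennreal (exp (- c * l))"
proof -
  have "emeasure (density lborel (shifted_exp_density s0 l)) {z. s0 + c < z}
      = emeasure (density lborel (exponential_density l)) ((+) s0 -` {z. s0 + c < z} \<inter> space (density lborel (exponential_density l)))"
    unfolding N_distr by (rule emeasure_distr) auto
  also have "(+) s0 -` {z. s0 + c < z} \<inter> space (density lborel (exponential_density l)) = {y. c < y}"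
    by auto
  finally show ?thesis using E_gt[OF l c] by simp
qed

lemma N_AE: assumes l: "0 < l"
  shows "AE z in density lborel (shifted_exp_density s0 l). s0 \<le> z"
  unfolding N_distr
  by (subst AE_distr_iff) (auto simp: AE_density exponential_density_def not_less)

lemma E_integrable_id: assumes l: "0 < l"
  shows "integrable (density lborel (exponential_density l)) (\<lambda>y. y)"
proof -
  have "integrable lborel (\<lambda>y. exponential_density l y * y)"
  proof (rule integrableI_nonneg)
    show "AE x in lborel. 0 \<le> exponential_density l x * x"
      using l by (auto simp: exponential_density_def)
    show "(\<integral>\<^sup>+ x. ennreal (exponential_density l x * x) \<partial>lborel) < \<infinity>"
      using nn_integral_erlang_ith_moment[OF l, of 0 1] by simp
  qed simp
  then show ?thesis
    using l by (subst integrable_density) (auto simp: exponential_density_nonneg)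
qed

lemma N_integrable:
  fixes g :: "real \<Rightarrow> real"
  assumes l: "0 < l" and s0: "0 \<le> s0" and g[measurable]: "g \<in> borel_measurable borel"
    and bnd: "\<And>z. 0 \<le> z \<Longrightarrow> \<bar>g z\<bar> \<le> A + B * z"
  shows "integrable (density lborel (shifted_exp_density s0 l)) g"
proof -
  interpret E: prob_space "density lborel (exponential_density l)"
    by (rule prob_space_exponential_density[OF l])
  have "integrable (density lborel (exponential_density l)) (\<lambda>y. g (s0 + y))"
  proof (rule Bochner_Integration.integrable_bound)
    show "integrable (density lborel (exponential_density l)) (\<lambda>y. A + B * s0 + B * y)"
      using E_integrable_id[OF l] by auto
    have "AE y in density lborel (exponential_density l). 0 \<le> y"
      by (auto simp: AE_density exponential_density_def not_less)
    then show "AE y in density lborel (exponential_density l). norm (g (s0 + y)) \<le> norm (A + B * s0 + B * y)"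
    proof eventually_elim
      case (elim y)
      then have "\<bar>g (s0 + y)\<bar> \<le> A + B * (s0 + y)" using s0 by (intro bnd) simp
      then show ?case by (simp add: algebra_simps)
    qed
  qed simp
  then show ?thesis
    unfolding N_distr by (subst integrable_distr_eq) auto
qed



lemma MAX_ge_fin: "f x \<le> (MAX y::'x::finite. f y)" for f :: "'x::finite \<Rightarrow> 'a::linorder"
  by (rule Max_ge) auto

lemma MAX_le_fin: "(\<And>x. f x \<le> b) \<Longrightarrow> (MAX y::'x::finite. f y) \<le> b" for f :: "'x::finite \<Rightarrow> 'a::linorder"
  by (subst Max_le_iff) auto

lemma MAX_attain: "\<exists>x0. (MAX y::'x::finite. f y) = f x0" for f :: "'x::finite \<Rightarrow> 'a::linorder"
proof -
  have "(MAX y::'x::finite. f y) \<in> range f" by (rule Max_in) auto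
  then show ?thesis by (metis imageE)
qed

lemma abs_MAX_le: "\<bar>MAX y::'x::finite. f y\<bar> \<le> (\<Sum>y\<in>UNIV. \<bar>f y\<bar>)" for f :: "'x::finite \<Rightarrow> real"
proof -
  obtain x0 where "(MAX y::'x::finite. f y) = f x0" using MAX_attain by blast
  moreover have "\<bar>f x0\<bar> \<le> (\<Sum>y\<in>UNIV. \<bar>f y\<bar>)"
    by (rule member_le_sum) auto
  ultimately show ?thesis by simp
qed

lemma gauss_coord:
  fixes F :: "'w \<Rightarrow> 'x::finite \<Rightarrow> real"
  assumes "gaussian_vec M F m C"
  shows "real_gaussian_rv M (\<lambda>\<omega>. F \<omega> x) (m x) (C x x)"
proof -
  from assms have "\<forall>c::'x\<Rightarrow>real. real_gaussian_rv M (\<lambda>\<omega>. \<Sum>y\<in>UNIV. c y * F \<omega> y)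
        (\<Sum>y\<in>UNIV. c y * m y)
        (\<Sum>y\<in>UNIV. \<Sum>z\<in>UNIV. c y * c z * C y z)"
    unfolding gaussian_vec_def by blast
  note g = spec[OF this, of "\<lambda>y. if y = x then 1 else 0"]
  have h: "(\<Sum>y\<in>UNIV. (if y = x then 1 else 0) * a y) = a x" for a :: "'x \<Rightarrow> real"
  proof -
    have "(\<Sum>y\<in>UNIV. (if y = x then 1 else 0) * a y) = (\<Sum>y\<in>UNIV. if y = x then a y else 0)"
      by (rule sum.cong) auto
    also have "\<dots> = a x" by simp
    finally show ?thesis .
  qed
  have h2: "(\<Sum>y\<in>UNIV. \<Sum>z\<in>UNIV. (if y = x then 1 else 0) * (if z = x then 1 else 0) * C y z)
     = (\<Sum>y\<in>UNIV. (if y = x then 1 else 0) * (\<Sum>z\<in>UNIV. (if z = x then 1 else 0) * C y z))"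
    by (simp add: sum_distrib_left mult.assoc)
  show ?thesis using g unfolding h2 h .
qed

lemma n_identity:
  fixes n a :: real
  assumes n: "2 \<le> n"
  shows "n * (exp (- a / 2) / 2) = exp (- (a - 2 * ln (n / 2)) * (1/2))"
proof -
  have "exp (- (a - 2 * ln (n / 2)) * (1/2)) = exp (ln (n/2) + (- a / 2))"
    by (simp add: field_simps)
  also have "\<dots> = exp (ln (n/2)) * exp (- a / 2)"
    by (rule exp_add)
  also have "exp (ln (n/2)) = n/2" using n by simp
  finally show ?thesis by simp
qed

theorem lemma4p2:
  fixes k :: "'x::finite \<Rightarrow> 'x \<Rightarrow> real"
    and s2 :: real
    and t :: nat
    and xs :: "'x list" and ys :: "real list"
    and M :: "'w measure" and F :: "'w \<Rightarrow> 'x \<Rightarrow> real"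
  assumes card_X: "CARD('x) \<ge> 2"
    and k_psd: "psd_kernel k"
    and noise_pos: "s2 > 0"
    and t_ge: "t \<ge> 1"
    and len_xs: "length xs = t - 1" and len_ys: "length ys = t - 1"
    and posterior: "gaussian_vec M F (post_mean k s2 xs ys) (post_cov k s2 xs)"
  shows "(\<integral>\<omega>. (MAX x. F \<omega> x) \<partial>M)
     \<le> (\<integral>z. (MAX x. post_mean k s2 xs ys x + sqrt z * post_sd k s2 xs x)
          \<partial>(density lborel (shifted_exp_density (2 * ln (real CARD('x) / 2)) (1/2))))"
proof -
  define n where "n = real CARD('x)"
  have n2: "2 \<le> n" using card_X unfolding n_def by simp
  define s0 where "s0 = 2 * ln (n / 2)"
  have s0: "0 \<le> s0" using n2 unfolding s0_def by simp
  define N where "N = density lborel (shifted_exp_density s0 (1/2))"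
  define mu where "mu = post_mean k s2 xs ys"
  define C where "C = post_cov k s2 xs"
  define sd where "sd = post_sd k s2 xs"
  have sd_def': "sd x = sqrt (C x x)" for x unfolding sd_def C_def post_sd_def ..
  have PM: "prob_space M" using posterior unfolding gaussian_vec_def by blast
  interpret M: prob_space M by (rule PM)
  have PN: "prob_space N" unfolding N_def by (rule N_prob) simp
  interpret N: prob_space N by (rule PN)
  have G: "real_gaussian_rv M (\<lambda>\<omega>. F \<omega> x) (mu x) (C x x)" for x
    unfolding mu_def C_def by (rule gauss_coord[OF posterior])
  have Cnn: "0 \<le> C x x" for x
  proof -
    have "C x x = 0 \<or> 0 < C x x" using G[of x] unfolding real_gaussian_rv_def by metis
    then show ?thesis by auto
  qed
  have sdnn: "0 \<le> sd x" for x unfolding sd_def' using Cnn[of x] by simp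
  have Fm[measurable]: "(\<lambda>\<omega>. F \<omega> x) \<in> borel_measurable M" for x
    using G[of x] unfolding real_gaussian_rv_def by blast
  have Fdist: "distributed M lborel (\<lambda>\<omega>. F \<omega> x) (normal_density (mu x) (sd x))" if "0 < sd x" for x
  proof -
    have "C x x \<noteq> 0" using that unfolding sd_def' by auto
    then show ?thesis using G[of x] unfolding real_gaussian_rv_def sd_def' by auto
  qed
  have Fae: "AE \<omega> in M. F \<omega> x = mu x" if "sd x = 0" for x
  proof -
    have "C x x = 0" using that Cnn[of x] unfolding sd_def' by simp
    then show ?thesis using G[of x] unfolding real_gaussian_rv_def by auto
  qed
  have Fint: "integrable M (\<lambda>\<omega>. F \<omega> x)" for x
  proof (cases "0 < sd x")
    case True
    have "integrable lborel (\<lambda>z. normal_density (mu x) (sd x) z * z)"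
      using True by (rule integrable_normal_moment_nz_1)
    then show ?thesis
      using distributed_integrable[OF Fdist[OF True], of "\<lambda>z. z"] by simp
  next
    case False
    then have "sd x = 0" using sdnn[of x] by simp
    then have "AE \<omega> in M. mu x = F \<omega> x" using Fae[of x] by (auto elim: eventually_mono)
    then show ?thesis using integrable_cong_AE_imp[of M "\<lambda>_. mu x" "\<lambda>\<omega>. F \<omega> x"] Fm[of x] by simp
  qed
  define W where "W \<omega> = (MAX x. (if 0 < sd x then (max 0 ((F \<omega> x - mu x) / sd x))\<^sup>2 else 0))" for \<omega>
  define g where "g z = (MAX x. mu x + sqrt z * sd x)" for z
  define c0 where "c0 = (MAX x. mu x)"
  define phi where "phi z = g z - c0" for z
  have Wm[measurable]: "W \<in> borel_measurable M" unfolding W_def by measurable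
  have gm[measurable]: "g \<in> borel_measurable borel" unfolding g_def by measurable
  have phim[measurable]: "phi \<in> borel_measurable borel" unfolding phi_def by measurable
  have mono: "mono phi"
  proof (rule monoI)
    fix u v :: real assume "u \<le> v"
    then have "mu x + sqrt u * sd x \<le> mu x + sqrt v * sd x" for x
      using sdnn[of x] by (simp add: mult_right_mono)
    then have "g u \<le> g v" unfolding g_def
      using MAX_ge_fin[of "\<lambda>y. mu y + sqrt v * sd y"] by (intro MAX_le_fin) (meson order_trans)
    then show "phi u \<le> phi v" unfolding phi_def by simp
  qed
  have pw: "AE \<omega> in M. (MAX x. F \<omega> x) \<le> g (W \<omega>)"
  proof -
    have "AE \<omega> in M. \<forall>x\<in>UNIV. F \<omega> x \<le> mu x + sqrt (W \<omega>) * sd x"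
    proof (rule AE_finite_allI)
      fix x :: 'x
      show "AE \<omega> in M. F \<omega> x \<le> mu x + sqrt (W \<omega>) * sd x"
      proof (cases "0 < sd x")
        case True
        show ?thesis
        proof (rule AE_I2)
          fix \<omega>
          define Z where "Z = (F \<omega> x - mu x) / sd x"
          have FZ: "F \<omega> x = mu x + sd x * Z" unfolding Z_def using True by simp
          have "(max 0 Z)\<^sup>2 \<le> W \<omega>"
            unfolding W_def Z_def using MAX_ge_fin[of "\<lambda>x. if 0 < sd x then (max 0 ((F \<omega> x - mu x) / sd x))\<^sup>2 else 0" x] True
            by simp
          then have "sqrt ((max 0 Z)\<^sup>2) \<le> sqrt (W \<omega>)" by (rule real_sqrt_le_mono)
          then have "Z \<le> sqrt (W \<omega>)" by simp
          then show "F \<omega> x \<le> mu x + sqrt (W \<omega>) * sd x"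
            unfolding FZ using True by (simp add: mult.commute mult_left_mono)
        qed
      next
        case False
        then have "sd x = 0" using sdnn[of x] by simp
        then show ?thesis using Fae[of x] by auto
      qed
    qed simp
    then show ?thesis
    proof eventually_elim
      case (elim \<omega>)
      then show ?case unfolding g_def
        using MAX_ge_fin[of "\<lambda>y. mu y + sqrt (W \<omega>) * sd y"] by (intro MAX_le_fin) (meson order_trans UNIV_I)
    qed
  qed
  have tail: "emeasure M {\<omega>\<in>space M. a \<le> W \<omega>} \<le> emeasure N {z. a < z}" for a
  proof (cases "a \<le> s0")
    case True
    have "emeasure N {z. s0 + 0 < z} = 1" unfolding N_def by (subst N_gt) auto
    moreover have "emeasure N {z. s0 + 0 < z} \<le> emeasure N {z. a < z}"
      using True by (intro emeasure_mono) (auto simp: N_def)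
    ultimately have "1 \<le> emeasure N {z. a < z}" by simp
    moreover have "emeasure M {\<omega>\<in>space M. a \<le> W \<omega>} \<le> 1" by (rule M.emeasure_le_1)
    ultimately show ?thesis by (rule order_trans[rotated])
  next
    case False
    then have a0: "0 < a" using s0 by simp
    define T where "T x = (if 0 < sd x then (\<lambda>\<omega>. F \<omega> x) -` {mu x + sd x * sqrt a..} \<inter> space M else {})" for x
    have Tsets: "T x \<in> sets M" for x unfolding T_def by auto
    have sub: "{\<omega>\<in>space M. a \<le> W \<omega>} \<subseteq> (\<Union>x\<in>UNIV. T x)"
    proof safe
      fix \<omega> assume \<omega>: "\<omega> \<in> space M" and aW: "a \<le> W \<omega>"
      obtain x0 where x0: "W \<omega> = (if 0 < sd x0 then (max 0 ((F \<omega> x0 - mu x0) / sd x0))\<^sup>2 else 0)"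
        using MAX_attain[of "\<lambda>x. if 0 < sd x then (max 0 ((F \<omega> x - mu x) / sd x))\<^sup>2 else 0"]
        unfolding W_def by blast
      have sdx: "0 < sd x0" using x0 aW a0 by (auto split: if_splits)
      define Z where "Z = (F \<omega> x0 - mu x0) / sd x0"
      have "a \<le> (max 0 Z)\<^sup>2" using x0 aW sdx unfolding Z_def by simp
      then have "sqrt a \<le> sqrt ((max 0 Z)\<^sup>2)" by (rule real_sqrt_le_mono)
      then have "sqrt a \<le> max 0 Z" by simp
      moreover have "0 < sqrt a" using a0 by simp
      ultimately have "sqrt a \<le> Z" by linarith
      then have "sd x0 * sqrt a \<le> F \<omega> x0 - mu x0" unfolding Z_def using sdx
        by (simp add: pos_le_divide_eq mult.commute)
      then have "\<omega> \<in> T x0" unfolding T_def using sdx \<omega> by simp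
      then show "\<omega> \<in> (\<Union>x\<in>UNIV. T x)" by blast
    qed
    have Tb: "emeasure M (T x) \<le> ennreal (exp (- a / 2) / 2)" for x
    proof (cases "0 < sd x")
      case True
      have "emeasure M (T x) = (\<integral>\<^sup>+z. ennreal (normal_density (mu x) (sd x) z) * indicator {mu x + sd x * sqrt a..} z \<partial>lborel)"
        unfolding T_def using True by (simp add: distributed_emeasure[OF Fdist[OF True]])
      also have "\<dots> \<le> ennreal (exp (- (sqrt a)\<^sup>2 / 2) / 2)"
        by (rule gauss_tail) (use True a0 in auto)
      finally show ?thesis using a0 by simp
    qed (simp add: T_def)
    have "emeasure M {\<omega>\<in>space M. a \<le> W \<omega>} \<le> emeasure M (\<Union>x\<in>UNIV. T x)"
      by (rule emeasure_mono[OF sub]) (use Tsets in auto)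
    also have "\<dots> \<le> (\<Sum>x\<in>UNIV. emeasure M (T x))"
      by (rule emeasure_subadditive_finite) (use Tsets in auto)
    also have "\<dots> \<le> (\<Sum>x\<in>(UNIV::'x set). ennreal (exp (- a / 2) / 2))"
      by (rule sum_mono) (rule Tb)
    also have "\<dots> = ennreal (n * (exp (- a / 2) / 2))"
      unfolding n_def by (simp add: ennreal_of_nat_eq_real_of_nat) (metis ennreal_mult' of_nat_0_le_iff times_divide_eq_right)
    also have "\<dots> = ennreal (exp (- (a - s0) * (1/2)))"
      by (simp only: s0_def n_identity[OF n2])
    also have "\<dots> = emeasure N {z. s0 + (a - s0) < z}"
      unfolding N_def by (subst N_gt) (use False in auto)
    finally show ?thesis by simp
  qed
  have dom: "(\<integral>\<^sup>+\<omega>. ennreal (phi (W \<omega>)) \<partial>M) \<le> (\<integral>\<^sup>+z. ennreal (phi z) \<partial>N)"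
    by (rule dominance[OF PM PN _ Wm phim mono tail]) (simp add: N_def)
  have gbnd: "\<bar>g z\<bar> \<le> ((\<Sum>x\<in>UNIV. \<bar>mu x\<bar>) + (\<Sum>x\<in>UNIV. sd x)) + (\<Sum>x\<in>UNIV. sd x) * z" if "0 \<le> z" for z
  proof -
    have "\<bar>g z\<bar> \<le> (\<Sum>x\<in>UNIV. \<bar>mu x + sqrt z * sd x\<bar>)" unfolding g_def by (rule abs_MAX_le)
    also have "\<dots> \<le> (\<Sum>x\<in>UNIV. \<bar>mu x\<bar> + (1 + z) * sd x)"
    proof (rule sum_mono)
      fix x
      have "sqrt z \<le> 1 + z"
      proof (cases "z \<le> 1")
        case True then have "sqrt z \<le> 1" by simp
        then show ?thesis using that by linarith
      next
        case False then have "sqrt z \<le> z" by (simp add: real_sqrt_le_iff' power2_eq_square)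
        then show ?thesis by linarith
      qed
      then have "sqrt z * sd x \<le> (1 + z) * sd x" using sdnn[of x] by (rule mult_right_mono)
      moreover have "0 \<le> sqrt z * sd x" using that sdnn[of x] by simp
      ultimately show "\<bar>mu x + sqrt z * sd x\<bar> \<le> \<bar>mu x\<bar> + (1 + z) * sd x" by linarith
    qed
    also have "\<dots> = ((\<Sum>x\<in>UNIV. \<bar>mu x\<bar>) + (\<Sum>x\<in>UNIV. sd x)) + (\<Sum>x\<in>UNIV. sd x) * z"
      by (simp add: sum.distrib sum_distrib_left sum_distrib_right algebra_simps)
    finally show ?thesis .
  qed
  have gint: "integrable N g"
    unfolding N_def by (rule N_integrable[OF _ s0 gm gbnd]) simp_all
  have phiint: "integrable N phi" unfolding phi_def using gint by simp
  have phinn: "AE z in N. 0 \<le> phi z"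
  proof -
    have "AE z in N. s0 \<le> z" unfolding N_def by (rule N_AE) simp
    then show ?thesis
    proof eventually_elim
      case (elim z)
      then have z0: "0 \<le> z" using s0 by simp
      have "c0 \<le> g z" unfolding c0_def g_def
      proof (rule MAX_le_fin)
        fix x
        have "mu x \<le> mu x + sqrt z * sd x" using z0 sdnn[of x] by simp
        also have "\<dots> \<le> (MAX y. mu y + sqrt z * sd y)" by (rule MAX_ge_fin)
        finally show "mu x \<le> (MAX y. mu y + sqrt z * sd y)" .
      qed
      then show ?case unfolding phi_def by simp
    qed
  qed
  have phiN: "(\<integral>\<^sup>+z. ennreal (phi z) \<partial>N) = ennreal (\<integral>z. phi z \<partial>N)"
    by (rule nn_integral_eq_integral[OF phiint phinn])
  have maxFm[measurable]: "(\<lambda>\<omega>. MAX x. F \<omega> x) \<in> borel_measurable M" by measurable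
  have maxFint: "integrable M (\<lambda>\<omega>. MAX x. F \<omega> x)"
  proof (rule Bochner_Integration.integrable_bound)
    show "integrable M (\<lambda>\<omega>. \<Sum>x\<in>UNIV. \<bar>F \<omega> x\<bar>)" using Fint by auto
    show "AE \<omega> in M. norm (MAX x. F \<omega> x) \<le> norm (\<Sum>x\<in>UNIV. \<bar>F \<omega> x\<bar>)"
    proof (rule AE_I2)
      fix \<omega>
      have "\<bar>MAX x. F \<omega> x\<bar> \<le> (\<Sum>x\<in>UNIV. \<bar>F \<omega> x\<bar>)" by (rule abs_MAX_le)
      moreover have "0 \<le> (\<Sum>x\<in>UNIV. \<bar>F \<omega> x\<bar>)" by (simp add: sum_nonneg)
      ultimately show "norm (MAX x. F \<omega> x) \<le> norm (\<Sum>x\<in>UNIV. \<bar>F \<omega> x\<bar>)"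
        unfolding real_norm_def by linarith
    qed
  qed simp
  define h where "h \<omega> = (MAX x. F \<omega> x) - c0" for \<omega>
  have hint: "integrable M h" unfolding h_def using maxFint by simp
  have "(\<integral>\<omega>. h \<omega> \<partial>M) = enn2real (\<integral>\<^sup>+\<omega>. h \<omega> \<partial>M) - enn2real (\<integral>\<^sup>+\<omega>. ennreal (- h \<omega>) \<partial>M)"
    by (rule real_lebesgue_integral_def[OF hint])
  also have "\<dots> \<le> enn2real (\<integral>\<^sup>+\<omega>. h \<omega> \<partial>M)" by simp
  also have "\<dots> \<le> enn2real (\<integral>\<^sup>+\<omega>. ennreal (phi (W \<omega>)) \<partial>M)"
  proof (rule enn2real_mono)
    show "(\<integral>\<^sup>+\<omega>. h \<omega> \<partial>M) \<le> (\<integral>\<^sup>+\<omega>. ennreal (phi (W \<omega>)) \<partial>M)"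
      using pw
    proof (intro nn_integral_mono_AE, elim eventually_mono)
      fix \<omega> assume "(MAX x. F \<omega> x) \<le> g (W \<omega>)"
      then show "ennreal (h \<omega>) \<le> ennreal (phi (W \<omega>))"
        unfolding h_def phi_def by (intro ennreal_leI) simp
    qed
    show "(\<integral>\<^sup>+\<omega>. ennreal (phi (W \<omega>)) \<partial>M) < \<top>"
      using dom phiN by (metis ennreal_less_top order_le_less_trans)
  qed
  also have "\<dots> \<le> enn2real (\<integral>\<^sup>+z. ennreal (phi z) \<partial>N)"
    by (rule enn2real_mono[OF dom]) (simp add: phiN)
  also have "\<dots> = (\<integral>z. phi z \<partial>N)"
    using phiN integral_nonneg_AE[OF phinn] by simp
  finally have main: "(\<integral>\<omega>. h \<omega> \<partial>M) \<le> (\<integral>z. phi z \<partial>N)" .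
  have "(\<integral>\<omega>. h \<omega> \<partial>M) = (\<integral>\<omega>. (MAX x. F \<omega> x) \<partial>M) - c0"
    unfolding h_def using maxFint by (simp add: M.prob_space)
  moreover have "(\<integral>z. phi z \<partial>N) = (\<integral>z. g z \<partial>N) - c0"
    unfolding phi_def using gint by (simp add: N.prob_space)
  ultimately have "(\<integral>\<omega>. (MAX x. F \<omega> x) \<partial>M) \<le> (\<integral>z. g z \<partial>N)" using main by simp
  then show ?thesis unfolding g_def N_def s0_def n_def mu_def sd_def .
qed

end
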